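(* Let $N=\{1,\dots,n\}$, $n\ge2$, be a parallel-link network with unit demand and affine latencies $\ell_i(x_i)=a_ix_i+b_i$, $a_i>0$, $b_i\ge0$, with $x_i(0)>0$ for all $i\in N$. For $c\in\mathbb{R}_+$ let $t(c)$ be the unique element of $\mathcal{T}(c)$, $x(c)=x(t(c))$, and $A(c)=\{i\in N: t_i(c)=c\}$. Then there exist an integer $1\le j\le n$, numbers $c_1>c_2>\dots>c_j>0$, and sets $\emptyset=A_0\subsetneq A_1\subsetneq\dots\subsetneq A_j=N$ such that, with $c_0=\infty$: $A(c)=A_k$ for all $c\in(c_{k+1},c_k]\cap\mathbb{R}_+$, $k=0,\dots,j-1$, and $A(c)=N$ for all $c\in[0,c_j]$. Moreover, on each of the intervals $[c_1,\infty)$, $[c_{k+1},c_k]$ ($k=1,\dots,j-1$) and $[0,c_j]$, the map $c\mapsto x(c)$ is affine and $c\mapsto C(x(c))$ is a polynomial of degree at most $2$ in $c$; on $[c_1,\infty)$ and on $[0,c_j]$ the flow $x(c)$ is constant (on $[0,c_j]$ it equals $x(0)$). In particular $\min_{c\in\mathbb{R}_+}C(x(c))$ is attained.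
   Context: Parallel links $N$, one unit of flow; flows $x\in\mathbb{R}^N_+$ with $\sum_ix_i=1$; total latency cost $C(x)=\sum_{i\in N}\ell_i(x_i)x_i$. For tolls $t\in\mathbb{R}^N_+$, $x(t)$ is the unique Wardrop equilibrium for $t$ (for all $i,j$ with $x_i>0$: $\ell_i(x_i)+t_i\le\ell_j(x_j)+t_j$); $x(0)$ is the untolled one. Profit $\Pi_i(t)=t_ix_i(t)$. $\mathcal{T}(c)$: toll vectors $t$ with $0\le t_i\le c$ for all $i$ such that for every $i$ and $t'_i\in[0,c]$, $\Pi_i(t_i,t_{-i})\ge\Pi_i(t'_i,t_{-i})$ (flow recomputed). Under the hypotheses, $\mathcal{T}(c)$ is a singleton for every $c\in\mathbb{R}_+$. *)

theory Defs
  imports Complex_Main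
begin

text \<open>Parallel-link network with links 0..n-1 (paper: 1..n), affine latencies
  l_i(x) = a_i x + b_i. Flows and tolls are functions nat => real; components
  with index >= n are required to be 0 so that the equilibrium objects are
  unique as functions.\<close>

definition latency :: "(nat \<Rightarrow> real) \<Rightarrow> (nat \<Rightarrow> real) \<Rightarrow> nat \<Rightarrow> real \<Rightarrow> real" where
  "latency a b i y = a i * y + b i"

definition feasible_flow :: "nat \<Rightarrow> (nat \<Rightarrow> real) \<Rightarrow> bool" where
  "feasible_flow n x \<longleftrightarrow> (\<forall>i<n. 0 \<le> x i) \<and> (\<forall>i\<ge>n. x i = 0) \<and> (\<Sum>i<n. x i) = 1"

definition wardrop :: "nat \<Rightarrow> (nat \<Rightarrow> real) \<Rightarrow> (nat \<Rightarrow> real) \<Rightarrow> (nat \<Rightarrow> real) \<Rightarrow> (nat \<Rightarrow> real) \<Rightarrow> bool" where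
  "wardrop n a b t x \<longleftrightarrow> feasible_flow n x \<and>
     (\<forall>i<n. \<forall>j<n. 0 < x i \<longrightarrow> latency a b i (x i) + t i \<le> latency a b j (x j) + t j)"

definition eq_flow :: "nat \<Rightarrow> (nat \<Rightarrow> real) \<Rightarrow> (nat \<Rightarrow> real) \<Rightarrow> (nat \<Rightarrow> real) \<Rightarrow> (nat \<Rightarrow> real)" where
  "eq_flow n a b t = (THE x. wardrop n a b t x)"

definition profit :: "nat \<Rightarrow> (nat \<Rightarrow> real) \<Rightarrow> (nat \<Rightarrow> real) \<Rightarrow> (nat \<Rightarrow> real) \<Rightarrow> nat \<Rightarrow> real" where
  "profit n a b t i = t i * eq_flow n a b t i"

definition total_cost :: "nat \<Rightarrow> (nat \<Rightarrow> real) \<Rightarrow> (nat \<Rightarrow> real) \<Rightarrow> (nat \<Rightarrow> real) \<Rightarrow> real" where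
  "total_cost n a b x = (\<Sum>i<n. latency a b i (x i) * x i)"

definition toll_eq :: "nat \<Rightarrow> (nat \<Rightarrow> real) \<Rightarrow> (nat \<Rightarrow> real) \<Rightarrow> real \<Rightarrow> (nat \<Rightarrow> real) \<Rightarrow> bool" where
  "toll_eq n a b c t \<longleftrightarrow> (\<forall>i<n. 0 \<le> t i \<and> t i \<le> c) \<and> (\<forall>i\<ge>n. t i = 0) \<and>
     (\<forall>i<n. \<forall>t'. 0 \<le> t' \<and> t' \<le> c \<longrightarrow> profit n a b (t(i := t')) i \<le> profit n a b t i)"

definition toll_of_cap :: "nat \<Rightarrow> (nat \<Rightarrow> real) \<Rightarrow> (nat \<Rightarrow> real) \<Rightarrow> real \<Rightarrow> (nat \<Rightarrow> real)" where
  "toll_of_cap n a b c = (THE t. toll_eq n a b c t)"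

definition flow_of_cap :: "nat \<Rightarrow> (nat \<Rightarrow> real) \<Rightarrow> (nat \<Rightarrow> real) \<Rightarrow> real \<Rightarrow> (nat \<Rightarrow> real)" where
  "flow_of_cap n a b c = eq_flow n a b (toll_of_cap n a b c)"

definition capped_set :: "nat \<Rightarrow> (nat \<Rightarrow> real) \<Rightarrow> (nat \<Rightarrow> real) \<Rightarrow> real \<Rightarrow> nat set" where
  "capped_set n a b c = {i. i < n \<and> toll_of_cap n a b c i = c}"

end

theory Submission
  imports Defs
begin

locale net =
  fixes n :: nat and a b :: "nat \<Rightarrow> real"
  assumes n2: "2 \<le> n"
    and apos: "\<forall>i<n. 0 < a i"
begin

lemma n0: "0 < n" using n2 by simp

lemma wardrop_exists: "\<exists>y. wardrop n a b s y"
proof -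
  define f where "f = (\<lambda>v. \<Sum>j<n. max 0 ((v - b j - s j) / a j))"
  define lo where "lo = - (\<Sum>j<n. \<bar>b j + s j\<bar>)"
  define hi where "hi = b 0 + s 0 + a 0"
  have a0: "0 < a 0" using apos n0 by auto
  have lo_le: "\<And>j. j < n \<Longrightarrow> lo \<le> b j + s j"
  proof -
    fix j assume j: "j < n"
    have "\<bar>b j + s j\<bar> \<le> (\<Sum>j<n. \<bar>b j + s j\<bar>)"
      by (rule member_le_sum) (use j in auto)
    then show "lo \<le> b j + s j" unfolding lo_def by linarith
  qed
  have flo: "f lo = 0" unfolding f_def
  proof (rule sum.neutral, intro ballI)
    fix j assume "j \<in> {..<n}"
    then have "lo - b j - s j \<le> 0" "0 < a j" using lo_le[of j] apos by auto
    then have "(lo - b j - s j) / a j \<le> 0" by (simp add: divide_le_0_iff)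
    then show "max 0 ((lo - b j - s j) / a j) = 0" by simp
  qed
  have fhi: "1 \<le> f hi"
  proof -
    have "max 0 ((hi - b 0 - s 0) / a 0) \<le> f hi" unfolding f_def
      by (rule member_le_sum[where f="\<lambda>j. max 0 ((hi - b j - s j) / a j)"]) (use n0 in auto)
    moreover have "(hi - b 0 - s 0) / a 0 = 1" using a0 unfolding hi_def by simp
    ultimately show ?thesis by simp
  qed
  have "lo \<le> hi" using lo_le[of 0] n0 a0 unfolding hi_def by simp
  have cont: "continuous_on {lo..hi} f" unfolding f_def
    by (intro continuous_intros) (use apos in auto)
  obtain v where v: "f v = 1" using IVT'[of f lo 1 hi, OF _ fhi \<open>lo \<le> hi\<close> cont] flo by auto
  define y where "y = (\<lambda>j. if j < n then max 0 ((v - b j - s j) / a j) else 0)"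
  have "wardrop n a b s y"
    unfolding wardrop_def feasible_flow_def latency_def
  proof (intro conjI allI impI)
    show "(\<Sum>i<n. y i) = 1" using v unfolding f_def y_def by simp
  next
    fix i j assume i: "i < n" and j: "j < n" and yi: "0 < y i"
    have ai: "0 < a i" and aj: "0 < a j" using apos i j by auto
    have ci: "a i * y i + b i + s i = v" using yi ai i unfolding y_def by (auto simp: max_def split: if_splits)
    show "a i * y i + b i + s i \<le> a j * y j + b j + s j"
    proof (cases "0 < (v - b j - s j) / a j")
      case True then show ?thesis using ci aj j unfolding y_def by (auto simp: max_def)
    next
      case False
      then have "v \<le> b j + s j" using aj by (simp add: not_less divide_le_0_iff) 
      then show ?thesis using ci j aj unfolding y_def by (auto simp: max_def)
    qed
  qed (auto simp: y_def)
  then show ?thesis by blast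
qed

lemma wardrop_level:
  assumes "wardrop n a b s x"
  obtains m where "\<And>i. i < n \<Longrightarrow> 0 < x i \<Longrightarrow> a i * x i + b i + s i = m"
    "\<And>j. j < n \<Longrightarrow> m \<le> a j * x j + b j + s j"
proof -
  have ff: "(\<forall>i<n. 0 \<le> x i) \<and> (\<forall>i\<ge>n. x i = 0) \<and> (\<Sum>i<n. x i) = 1"
    and le: "\<forall>i<n. \<forall>j<n. 0 < x i \<longrightarrow> a i * x i + b i + s i \<le> a j * x j + b j + s j"
    using assms unfolding wardrop_def feasible_flow_def latency_def by auto
  have "\<exists>i0<n. 0 < x i0"
  proof (rule ccontr)
    assume "\<not> ?thesis"
    then have "\<forall>i<n. x i = 0" using ff by force
    then have "(\<Sum>i<n. x i) = 0" by simp
    with ff show False by simp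
  qed
  then obtain i0 where i0: "i0 < n" "0 < x i0" by blast
  show ?thesis
  proof (rule that[of "a i0 * x i0 + b i0 + s i0"])
    fix i assume "i < n" "0 < x i"
    then show "a i * x i + b i + s i = a i0 * x i0 + b i0 + s i0"
      using le i0 by (meson order_antisym)
  next
    fix j assume "j < n" then show "a i0 * x i0 + b i0 + s i0 \<le> a j * x j + b j + s j"
      using le i0 by blast
  qed
qed

lemma wardrop_flow:
  assumes "wardrop n a b s x"
  shows "\<forall>i<n. 0 \<le> x i" "\<forall>i\<ge>n. x i = 0" "(\<Sum>i<n. x i) = 1"
  using assms unfolding wardrop_def feasible_flow_def by auto

lemma wardrop_vi:
  assumes x: "wardrop n a b s x" and y: "wardrop n a b s y"
  shows "(\<Sum>i<n. (a i * x i + b i + s i) * x i) \<le> (\<Sum>i<n. (a i * x i + b i + s i) * y i)"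
proof -
  obtain m where m1: "\<And>i. i < n \<Longrightarrow> 0 < x i \<Longrightarrow> a i * x i + b i + s i = m"
    and m2: "\<And>j. j < n \<Longrightarrow> m \<le> a j * x j + b j + s j"
    using wardrop_level[OF x] by blast
  note fx = wardrop_flow[OF x] and fy = wardrop_flow[OF y]
  have "(\<Sum>i<n. (a i * x i + b i + s i) * x i) = (\<Sum>i<n. m * x i)"
  proof (rule sum.cong[OF refl])
    fix i assume "i \<in> {..<n}"
    then have "i < n" by simp
    show "(a i * x i + b i + s i) * x i = m * x i"
    proof (cases "0 < x i")
      case True then show ?thesis using m1 \<open>i < n\<close> by simp
    next
      case False then have "x i = 0" using fx \<open>i<n\<close> by force
      then show ?thesis by simp
    qed
  qed
  also have "\<dots> = m" using fx by (simp add: sum_distrib_left[symmetric])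
  also have "\<dots> = (\<Sum>i<n. m * y i)" using fy by (simp add: sum_distrib_left[symmetric])
  also have "\<dots> \<le> (\<Sum>i<n. (a i * x i + b i + s i) * y i)"
    by (rule sum_mono) (use m2 fy in \<open>auto intro: mult_right_mono\<close>)
  finally show ?thesis .
qed

lemma wardrop_unique:
  assumes x: "wardrop n a b s x" and y: "wardrop n a b s y"
  shows "x = y"
proof -
  note fx = wardrop_flow[OF x] and fy = wardrop_flow[OF y]
  have 1: "(\<Sum>i<n. (a i * x i + b i + s i) * x i) \<le> (\<Sum>i<n. (a i * x i + b i + s i) * y i)"
    by (rule wardrop_vi[OF x y])
  have 2: "(\<Sum>i<n. (a i * y i + b i + s i) * y i) \<le> (\<Sum>i<n. (a i * y i + b i + s i) * x i)"
    by (rule wardrop_vi[OF y x])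
  define P where "P = (\<lambda>i. (a i * x i + b i + s i) * x i)"
  define Q where "Q = (\<lambda>i. (a i * x i + b i + s i) * y i)"
  define R where "R = (\<lambda>i. (a i * y i + b i + s i) * y i)"
  define T where "T = (\<lambda>i. (a i * y i + b i + s i) * x i)"
  have pt: "\<And>i. a i * (x i - y i)^2 = (P i - Q i) + (R i - T i)"
    unfolding P_def Q_def R_def T_def by (simp add: power2_eq_square algebra_simps)
  have eq: "(\<Sum>i<n. a i * (x i - y i)^2) = ((\<Sum>i<n. P i) - (\<Sum>i<n. Q i)) + ((\<Sum>i<n. R i) - (\<Sum>i<n. T i))"
    unfolding pt by (simp only: sum.distrib sum_subtractf)
  have 1: "(\<Sum>i<n. P i) \<le> (\<Sum>i<n. Q i)" using 1 unfolding P_def Q_def .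
  have 2: "(\<Sum>i<n. R i) \<le> (\<Sum>i<n. T i)" using 2 unfolding R_def T_def .
  have le0: "(\<Sum>i<n. a i * (x i - y i)^2) \<le> 0" using 1 2 eq by linarith
  have nn: "\<forall>i\<in>{..<n}. 0 \<le> a i * (x i - y i)^2" using apos by (auto intro: mult_nonneg_nonneg less_imp_le)
  have "(\<Sum>i<n. a i * (x i - y i)^2) = 0" 
  proof -
    have "0 \<le> (\<Sum>i<n. a i * (x i - y i)^2)" using nn by (intro sum_nonneg) auto
    then show ?thesis using le0 by linarith
  qed
  then have "\<forall>i\<in>{..<n}. a i * (x i - y i)^2 = 0" 
    by (subst sum_nonneg_eq_0_iff[symmetric]) (use nn in auto)
  then have "\<forall>i<n. x i = y i" using apos by force
  show ?thesis
  proof (rule ext)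
    fix i show "x i = y i"
      using \<open>\<forall>i<n. x i = y i\<close> fx(2) fy(2) by (cases "i < n") auto
  qed
qed

lemma eq_flow_wardrop: "wardrop n a b s (eq_flow n a b s)"
  unfolding eq_flow_def using wardrop_exists wardrop_unique by (metis theI)

lemma eq_flow_eq: "wardrop n a b s x \<Longrightarrow> eq_flow n a b s = x"
  using eq_flow_wardrop wardrop_unique by blast

lemma wardrop_upper:
  assumes y: "wardrop n a b s y" and zs: "(\<Sum>j<n. z j) = 1"
    and zc: "\<And>j. j < n \<Longrightarrow> a j * z j + b j + s j = mu" and i: "i < n"
  shows "y i \<le> max 0 (z i)"
proof -
  obtain v where v1: "\<And>i. i < n \<Longrightarrow> 0 < y i \<Longrightarrow> a i * y i + b i + s i = v"
    and v2: "\<And>j. j < n \<Longrightarrow> v \<le> a j * y j + b j + s j"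
    using wardrop_level[OF y] by blast
  note fy = wardrop_flow[OF y]
  have "v \<le> mu"
  proof (rule ccontr)
    assume "\<not> v \<le> mu"
    then have vm: "mu < v" by simp
    have "\<forall>j\<in>{..<n}. z j < y j"
    proof
      fix j assume "j \<in> {..<n}" then have j: "j < n" by simp
      have aj: "0 < a j" using apos j by simp
      show "z j < y j"
      proof (cases "0 < y j")
        case True
        then have "a j * y j + b j + s j = v" using v1 j by blast
        then have "a j * z j < a j * y j" using zc[OF j] vm by linarith
        then show ?thesis using aj by simp
      next
        case False then have "y j = 0" using fy j by force
        then have "v \<le> b j + s j" using v2[OF j] by simp
        then have "a j * z j < 0" using zc[OF j] vm by linarith
        then have "z j < 0" using aj by (simp add: mult_less_0_iff)
        then show ?thesis using \<open>y j = 0\<close> by simp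
      qed
    qed
    then have "(\<Sum>j<n. z j) < (\<Sum>j<n. y j)" using n0 by (intro sum_strict_mono) auto
    then show False using zs fy by simp
  qed
  show ?thesis
  proof (cases "0 < y i")
    case True
    have ai: "0 < a i" using apos i by simp
    have "a i * y i + b i + s i = v" using v1 i True by blast
    then have "a i * y i \<le> a i * z i" using zc[OF i] \<open>v \<le> mu\<close> by linarith
    then have "y i \<le> z i" using ai by simp
    then show ?thesis by simp
  next
    case False then show ?thesis by simp
  qed
qed


definition "SS = (\<Sum>j<n. 1 / a j)"
definition "mm j = 2 - 1 / (a j * SS)"
definition "phi j l c = (l - b j - min c ((l - b j) / mm j)) / a j"
definition "Phi l c = (\<Sum>j<n. phi j l c)"

lemma SS_gt: assumes j: "j < n" shows "1 / a j < SS"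
proof -
  obtain k where k: "k < n" "k \<noteq> j" using n2 j
    by (metis One_nat_def Suc_1 Suc_le_lessD lessI less_trans zero_less_Suc n0 nat_neq_iff)
  have "SS = 1 / a j + (\<Sum>i\<in>{..<n} - {j}. 1 / a i)" unfolding SS_def
    using j by (subst sum.remove[of _ j]) auto
  moreover have "0 < (\<Sum>i\<in>{..<n} - {j}. 1 / a i)"
    using k apos by (intro sum_pos) auto
  ultimately show ?thesis by simp
qed

lemma SS_pos: "0 < SS" using SS_gt[of 0] n0 apos by (meson less_trans zero_less_divide_1_iff)

lemma aSS: "j < n \<Longrightarrow> 1 < a j * SS"
  using SS_gt[of j] apos by (simp add: field_simps)

lemma mm_gt1: "j < n \<Longrightarrow> 1 < mm j"
  using aSS[of j] unfolding mm_def by (simp add: field_simps)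

lemma phi_strict: assumes j: "j < n" and l: "l < l'" shows "phi j l c < phi j l' c"
proof -
  have m: "1 < mm j" and aj: "0 < a j" using mm_gt1 j apos by auto
  have uu: "(l - b j) / mm j \<le> (l' - b j) / mm j" using m l by (intro divide_right_mono) auto
  have ud: "(l' - b j) / mm j - (l - b j) / mm j = (l' - l) / mm j" by (simp add: diff_divide_distrib)
  have "min c ((l' - b j) / mm j) \<le> min c ((l - b j) / mm j) + (l' - l) / mm j"
    using uu ud by (auto simp: min_def)
  moreover have "(l' - l) / mm j < l' - l" using m l by (simp add: divide_less_eq)
  ultimately have "l - b j - min c ((l - b j) / mm j) < l' - b j - min c ((l' - b j) / mm j)" by linarith
  then show ?thesis unfolding phi_def using aj by (simp add: divide_strict_right_mono)
qed

lemma phi_anti: assumes j: "j < n" and c: "c \<le> c'" shows "phi j l c' \<le> phi j l c"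
  unfolding phi_def using apos j c by (intro divide_right_mono) (auto simp: min_def)

lemma phi_shift: assumes j: "j < n" and d: "0 \<le> d" shows "phi j l c \<le> phi j (l + d) (c + d)"
proof -
  have m: "1 < mm j" and aj: "0 < a j" using mm_gt1 j apos by auto
  have "d * 1 \<le> d * mm j" using m d by (intro mult_left_mono) auto
  then have dd: "d / mm j \<le> d" using m by (simp add: divide_le_eq)
  have ue: "(l + d - b j) / mm j = (l - b j) / mm j + d / mm j" by (simp add: add_divide_distrib[symmetric])
  have "min (c + d) ((l + d - b j) / mm j) \<le> min c ((l - b j) / mm j) + d"
    unfolding ue using dd by (auto simp: min_def)
  then show ?thesis unfolding phi_def using aj by (intro divide_right_mono) auto
qed

lemma Phi_strict: "l < l' \<Longrightarrow> Phi l c < Phi l' c"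
  unfolding Phi_def using phi_strict n0 by (intro sum_strict_mono) auto

lemma Phi_anti: "c \<le> c' \<Longrightarrow> Phi l c' \<le> Phi l c"
  unfolding Phi_def using phi_anti by (intro sum_mono) auto

lemma Phi_shift: "0 \<le> d \<Longrightarrow> Phi l c \<le> Phi (l + d) (c + d)"
  unfolding Phi_def using phi_shift by (intro sum_mono) auto

lemma Phi_cont: "continuous_on A (\<lambda>l. Phi l c)"
proof -
  have "\<And>j. j < n \<Longrightarrow> mm j \<noteq> 0" "\<And>j. j < n \<Longrightarrow> a j \<noteq> 0" using mm_gt1 apos by force+
  then show ?thesis unfolding Phi_def phi_def by (intro continuous_intros) auto
qed

end

locale net2 = net +
  assumes x0pos: "\<forall>i<n. 0 < eq_flow n a b (\<lambda>_. 0) i"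
begin

definition "y0 = eq_flow n a b (\<lambda>_. 0)"
definition "lam0 = a 0 * y0 0 + b 0"

lemma y0_level: "i < n \<Longrightarrow> a i * y0 i + b i = lam0"
proof -
  assume i: "i < n"
  have w: "wardrop n a b (\<lambda>_. 0) y0" unfolding y0_def by (rule eq_flow_wardrop)
  obtain v where v: "\<And>i. i < n \<Longrightarrow> 0 < y0 i \<Longrightarrow> a i * y0 i + b i + 0 = v"
    using wardrop_level[OF w] by metis
  show ?thesis using v[OF i] v[of 0] n0 x0pos i unfolding lam0_def y0_def by simp
qed

lemma lam0_gt: "i < n \<Longrightarrow> b i < lam0"
proof -
  assume i: "i < n"
  have "0 < a i * y0 i" using x0pos apos i unfolding y0_def by simp
  then show ?thesis using y0_level[OF i] by linarith
qed

lemma y0_eq: "i < n \<Longrightarrow> y0 i = (lam0 - b i) / a i"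
proof -
  assume i: "i < n"
  then have "a i > 0" using apos by simp
  then show ?thesis using y0_level[OF i] by (simp add: field_simps)
qed

lemma lam0_sum: "(\<Sum>i<n. (lam0 - b i) / a i) = 1"
proof -
  have "(\<Sum>i<n. (lam0 - b i) / a i) = (\<Sum>i<n. y0 i)" using y0_eq by simp
  also have "\<dots> = 1" using wardrop_flow(3)[OF eq_flow_wardrop] unfolding y0_def by simp
  finally show ?thesis .
qed

lemma Phi_lam0: "0 \<le> c \<Longrightarrow> Phi lam0 c \<le> 1"
proof -
  assume c: "0 \<le> c"
  have "Phi lam0 c \<le> (\<Sum>i<n. (lam0 - b i) / a i)" unfolding Phi_def phi_def
  proof (intro sum_mono divide_right_mono)
    fix i assume "i \<in> {..<n}"
    then have i: "i < n" by simp
    have "0 < (lam0 - b i) / mm i" "0 < a i" using lam0_gt[OF i] mm_gt1[OF i] apos i by auto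
    then show "lam0 - b i - min c ((lam0 - b i) / mm i) \<le> lam0 - b i" "0 \<le> a i" using c by auto
  qed
  then show ?thesis using lam0_sum by simp
qed

lemma Phi_lam0c: "1 \<le> Phi (lam0 + c) c"
proof -
  have "(\<Sum>i<n. (lam0 - b i) / a i) \<le> Phi (lam0 + c) c" unfolding Phi_def phi_def
    by (intro sum_mono divide_right_mono) (use apos in \<open>auto simp: min_def\<close>)
  then show ?thesis using lam0_sum by simp
qed

definition "lam c = (THE l. Phi l c = 1)"

lemma lam_ex: assumes c: "0 \<le> c" shows "Phi (lam c) c = 1 \<and> lam0 \<le> lam c \<and> lam c \<le> lam0 + c"
proof -
  obtain l where l: "lam0 \<le> l" "l \<le> lam0 + c" "Phi l c = 1"
    using IVT'[of "\<lambda>l. Phi l c" lam0 1 "lam0 + c", OF Phi_lam0[OF c] Phi_lam0c _ Phi_cont] c by auto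
  have u: "\<And>l'. Phi l' c = 1 \<Longrightarrow> l' = l"
    using Phi_strict l(3) by (metis linorder_neqE_linordered_idom order_less_irrefl)
  have "lam c = l" unfolding lam_def using l(3) u by (rule the_equality)
  then show ?thesis using l by simp
qed

lemma lam_uniq: "0 \<le> c \<Longrightarrow> Phi l c = 1 \<Longrightarrow> lam c = l"
  using lam_ex Phi_strict by (metis linorder_neqE_linordered_idom order_less_irrefl)

lemma lam_mono: assumes "0 \<le> c" "c \<le> c'" shows "lam c \<le> lam c'" "lam c' \<le> lam c + (c' - c)"
proof -
  have e: "Phi (lam c) c = 1" "Phi (lam c') c' = 1" using lam_ex assms by auto
  show "lam c \<le> lam c'"
  proof (rule ccontr)
    assume "\<not> ?thesis"
    then have "Phi (lam c') c' < Phi (lam c) c'" using Phi_strict by simp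
    moreover have "Phi (lam c) c' \<le> Phi (lam c) c" using Phi_anti assms by simp
    ultimately show False using e by simp
  qed
  show "lam c' \<le> lam c + (c' - c)"
  proof (rule ccontr)
    assume "\<not> ?thesis"
    then have "Phi (lam c + (c' - c)) c' < Phi (lam c') c'" using Phi_strict by simp
    moreover have "Phi (lam c) c \<le> Phi (lam c + (c' - c)) (c + (c' - c))"
      by (rule Phi_shift) (use assms in simp)
    ultimately show False using e by simp
  qed
qed

lemma lam_0: "lam 0 = lam0" using lam_ex[of 0] by simp

lemma lam_lip: "0 \<le> x \<Longrightarrow> 0 \<le> x' \<Longrightarrow> \<bar>lam x' - lam x\<bar> \<le> \<bar>x' - x\<bar>"
proof (cases "x \<le> x'")
  case True
  assume "0 \<le> x" then show ?thesis using lam_mono[of x x'] True by auto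
next
  case False
  assume "0 \<le> x'" then show ?thesis using lam_mono[of x' x] False by auto
qed

lemma lam_cont: "continuous_on {0..} lam"
  unfolding continuous_on_def
proof (intro ballI)
  fix x :: real assume x: "x \<in> {0..}"
  show "(lam \<longlongrightarrow> lam x) (at x within {0..})"
    unfolding tendsto_iff eventually_at
  proof (intro allI impI)
    fix e :: real assume e: "0 < e"
    show "\<exists>d>0. \<forall>x'\<in>{0..}. x' \<noteq> x \<and> dist x' x < d \<longrightarrow> dist (lam x') (lam x) < e"
    proof (intro exI[of _ e] conjI ballI impI)
      fix x' assume x': "x' \<in> {0..}" and d: "x' \<noteq> x \<and> dist x' x < e"
      have "\<bar>lam x' - lam x\<bar> \<le> \<bar>x' - x\<bar>" using lam_lip x x' by auto
      then show "dist (lam x') (lam x) < e" using d by (simp add: dist_real_def)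
    qed (use e in auto)
  qed
qed


definition "tc c i = (if i < n then min c ((lam c - b i) / mm i) else 0)"
definition "xc c i = (if i < n then (lam c - b i - tc c i) / a i else 0)"
definition "kk i = (mm i - 1) / a i"

lemma u_pos: "0 \<le> c \<Longrightarrow> i < n \<Longrightarrow> 0 < (lam c - b i) / mm i"
  using lam_ex[of c] lam0_gt[of i] mm_gt1[of i] by auto

lemma u_le: "0 \<le> c \<Longrightarrow> i < n \<Longrightarrow> (lam c - b i) / mm i \<le> lam c - b i"
proof -
  assume c: "0 \<le> c" and i: "i < n"
  have "0 < lam c - b i" using lam_ex[OF c] lam0_gt[OF i] by auto
  moreover have m: "1 < mm i" using mm_gt1[OF i] .
  ultimately have "(lam c - b i) * 1 \<le> (lam c - b i) * mm i" by (intro mult_left_mono) auto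
  then show ?thesis using m by (simp add: divide_le_eq)
qed

lemma tc_bounds: "0 \<le> c \<Longrightarrow> i < n \<Longrightarrow> 0 \<le> tc c i \<and> tc c i \<le> c"
  using u_pos[of c i] unfolding tc_def by auto

lemma xc_nonneg: "0 \<le> c \<Longrightarrow> i < n \<Longrightarrow> 0 \<le> xc c i"
  using u_le[of c i] apos unfolding xc_def tc_def by (auto simp: min_def)

lemma xc_cost: "i < n \<Longrightarrow> a i * xc c i + b i + tc c i = lam c"
  using apos unfolding xc_def by auto

lemma xc_sum: "0 \<le> c \<Longrightarrow> (\<Sum>i<n. xc c i) = 1"
proof -
  assume c: "0 \<le> c"
  have "(\<Sum>i<n. xc c i) = Phi (lam c) c" unfolding Phi_def phi_def xc_def tc_def by simp
  then show ?thesis using lam_ex[OF c] by simp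
qed

lemma xc_wardrop: assumes c: "0 \<le> c" shows "wardrop n a b (tc c) (xc c)"
proof -
  have 1: "\<forall>i<n. 0 \<le> xc c i" using xc_nonneg c by auto
  have 2: "\<forall>i\<ge>n. xc c i = 0" by (simp add: xc_def)
  have 3: "\<forall>i<n. \<forall>j<n. 0 < xc c i \<longrightarrow> a i * xc c i + b i + tc c i \<le> a j * xc c j + b j + tc c j"
    using xc_cost by auto
  show ?thesis unfolding wardrop_def feasible_flow_def latency_def using 1 2 3 xc_sum[OF c] by auto
qed

lemma eq_flow_tc: "0 \<le> c \<Longrightarrow> eq_flow n a b (tc c) = xc c"
  by (rule eq_flow_eq[OF xc_wardrop])

lemma kk_pos: "i < n \<Longrightarrow> 0 < kk i"
  using mm_gt1[of i] apos unfolding kk_def by auto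

lemma foc: assumes c: "0 \<le> c" and i: "i < n" and t': "0 \<le> t'" "t' \<le> c"
  shows "t' * (xc c i - kk i * (t' - tc c i)) \<le> tc c i * xc c i"
proof (cases "c \<le> (lam c - b i) / mm i")
  case True
  then have t: "tc c i = c" unfolding tc_def using i by simp
  have m: "1 < mm i" and ai: "0 < a i" using mm_gt1[OF i] apos i by auto
  have "c * mm i \<le> lam c - b i" using True m by (simp add: le_divide_eq)
  then have "a i * (c * mm i) \<le> a i * (lam c - b i)" using ai by (intro mult_left_mono) auto
  then have "kk i * c \<le> xc c i" unfolding kk_def xc_def using t i ai
    by (simp add: field_simps)
  moreover have "kk i * t' \<le> kk i * c" using kk_pos[OF i] t' by (intro mult_left_mono) auto
  ultimately have "0 \<le> (c - t') * (xc c i - kk i * t')" using t' by (intro mult_nonneg_nonneg) auto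
  then show ?thesis unfolding t by (simp add: algebra_simps)
next
  case False
  then have t: "tc c i = (lam c - b i) / mm i" unfolding tc_def using i by simp
  have m: "1 < mm i" and ai: "0 < a i" using mm_gt1[OF i] apos i by auto
  have x: "xc c i = kk i * tc c i" unfolding xc_def kk_def t using i m ai
    by (simp add: field_simps)
  have "0 \<le> kk i * (tc c i - t')^2" using kk_pos[OF i] by simp
  then show ?thesis unfolding x by (simp add: power2_eq_square algebra_simps)
qed

lemma tc_toll_eq: assumes c: "0 \<le> c" shows "toll_eq n a b c (tc c)"
  unfolding toll_eq_def
proof (intro conjI allI impI)
  show "\<And>i. i < n \<Longrightarrow> 0 \<le> tc c i" "\<And>i. i < n \<Longrightarrow> tc c i \<le> c" using tc_bounds c by auto
  show "\<And>i. n \<le> i \<Longrightarrow> tc c i = 0" unfolding tc_def by simp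
next
  fix i t' assume i: "i < n" and t': "0 \<le> t' \<and> t' \<le> c"
  define s where "s = (tc c)(i := t')"
  define d where "d = t' - tc c i"
  define dl where "dl = d / (a i * SS)"
  define z where "z = (\<lambda>j. xc c j + (dl - (if j = i then d else 0)) / a j)"
  have ai: "0 < a i" using apos i by simp
  have y: "wardrop n a b s (eq_flow n a b s)" by (rule eq_flow_wardrop)
  have "(\<Sum>j<n. z j) = (\<Sum>j<n. xc c j) + dl * (\<Sum>j<n. 1 / a j) - (\<Sum>j<n. (if j = i then d / a j else 0))"
  proof -
    have "\<And>j. z j = xc c j + dl * (1 / a j) - (if j = i then d / a j else 0)"
      unfolding z_def by (simp add: diff_divide_distrib)
    then show ?thesis by (simp add: sum.distrib sum_subtractf sum_distrib_left)
  qed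
  also have "(\<Sum>j<n. (if j = i then d / a j else 0)) = d / a i" using i by (simp add: sum.delta)
  also have "(\<Sum>j<n. xc c j) + dl * (\<Sum>j<n. 1 / a j) - d / a i = 1 + dl * SS - d / a i"
    using xc_sum[OF c] unfolding SS_def by simp
  also have "\<dots> = 1" unfolding dl_def using SS_pos ai by simp
  finally have zs: "(\<Sum>j<n. z j) = 1" .
  have zc: "\<And>j. j < n \<Longrightarrow> a j * z j + b j + s j = lam c + dl"
  proof -
    fix j assume j: "j < n"
    have aj: "0 < a j" using apos j by simp
    have "a j * z j = a j * xc c j + dl - (if j = i then d else 0)" unfolding z_def using aj
      by (simp add: field_simps)
    then show "a j * z j + b j + s j = lam c + dl" using xc_cost[OF j, of c] unfolding s_def d_def
      by auto
  qed
  have yle: "eq_flow n a b s i \<le> max 0 (z i)" by (rule wardrop_upper[OF y zs zc i])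
  have zi: "z i = xc c i - kk i * (t' - tc c i)"
    unfolding z_def dl_def kk_def mm_def d_def using ai SS_pos by (simp add: field_simps)
  have "profit n a b s i = t' * eq_flow n a b s i" unfolding profit_def s_def by simp
  also have "\<dots> \<le> t' * max 0 (z i)" using yle t' by (intro mult_left_mono) auto
  also have "\<dots> \<le> tc c i * xc c i"
  proof (cases "0 \<le> z i")
    case True then show ?thesis using foc[OF c i, of t'] t' zi by simp
  next
    case False then show ?thesis using tc_bounds[OF c i] xc_nonneg[OF c i] by simp
  qed
  also have "\<dots> = profit n a b (tc c) i" unfolding profit_def eq_flow_tc[OF c] ..
  finally show "profit n a b ((tc c)(i := t')) i \<le> profit n a b (tc c) i" unfolding s_def .
qed


definition "gg i c = (lam c - b i) / mm i - c"

lemma gg_strict: assumes "0 \<le> c" "c < c'" "i < n" shows "gg i c' < gg i c"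
proof -
  have m: "1 < mm i" using mm_gt1 assms by simp
  have l: "lam c' \<le> lam c + (c' - c)" using lam_mono assms by simp
  then have "(lam c' - b i) / mm i \<le> (lam c + (c' - c) - b i) / mm i" using m by (intro divide_right_mono) auto
  also have "\<dots> = (lam c - b i) / mm i + (c' - c) / mm i" by (simp add: add_divide_distrib[symmetric])
  finally have 1: "(lam c' - b i) / mm i \<le> (lam c - b i) / mm i + (c' - c) / mm i" .
  have "(c' - c) * 1 < (c' - c) * mm i" using m assms by (intro mult_strict_left_mono) auto
  then have "(c' - c) / mm i < c' - c" using m by (simp add: divide_less_eq)
  then show ?thesis using 1 unfolding gg_def by linarith
qed

lemma gg_cont: "i < n \<Longrightarrow> continuous_on {0..} (gg i)"
proof -
  assume "i < n" then have "mm i \<noteq> 0" using mm_gt1 by force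
  then show ?thesis unfolding gg_def by (intro continuous_intros lam_cont) auto
qed

lemma gg_zero_ex: assumes i: "i < n" shows "\<exists>z. 0 < z \<and> gg i z = 0"
proof -
  have m: "1 < mm i" using mm_gt1 i by simp
  define C where "C = (lam0 - b i) / (mm i - 1) + 1"
  have bl: "b i < lam0" using lam0_gt i by simp
  have C0: "0 \<le> C" unfolding C_def using m bl by (auto intro!: add_nonneg_nonneg divide_nonneg_nonneg)
  have g0: "0 < gg i 0" unfolding gg_def lam_0 using m bl by simp
  have "(mm i - 1) * C = lam0 - b i + (mm i - 1)" unfolding C_def using m by (simp add: field_simps)
  then have lt: "lam0 + C - b i < C * mm i" using m by (simp add: algebra_simps)
  have "gg i C \<le> (lam0 + C - b i) / mm i - C" unfolding gg_def
    using lam_ex[OF C0] m by (auto intro!: divide_right_mono)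
  also have "\<dots> < 0" using lt m by (simp add: divide_less_eq)
  finally have gC: "gg i C < 0" .
  have "continuous_on {0..C} (gg i)" by (rule continuous_on_subset[OF gg_cont[OF i]]) auto
  then obtain z where z: "0 \<le> z" "z \<le> C" "gg i z = 0"
    using IVT2'[of "gg i" C 0 0] gC g0 C0 by auto
  then have "z \<noteq> 0" using g0 by auto
  then show ?thesis using z by (intro exI[of _ z]) auto
qed

definition "cz i = (SOME z. 0 < z \<and> gg i z = 0)"

lemma cz: "i < n \<Longrightarrow> 0 < cz i \<and> gg i (cz i) = 0"
  unfolding cz_def using gg_zero_ex by (rule someI_ex)

lemma gg_nonneg_iff: assumes "i < n" "0 \<le> c" shows "0 \<le> gg i c \<longleftrightarrow> c \<le> cz i"
proof
  assume "0 \<le> gg i c" show "c \<le> cz i"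
  proof (rule ccontr)
    assume "\<not> ?thesis" then have "gg i c < gg i (cz i)" using gg_strict[of "cz i" c i] cz[of i] assms by auto
    then show False using cz[of i] assms \<open>0 \<le> gg i c\<close> by simp
  qed
next
  assume "c \<le> cz i" then show "0 \<le> gg i c"
    using gg_strict[of c "cz i" i] cz[of i] assms by (cases "c = cz i") auto
qed

lemma gg_nonpos_iff: assumes "i < n" "0 \<le> c" shows "gg i c \<le> 0 \<longleftrightarrow> cz i \<le> c"
proof
  assume "gg i c \<le> 0" show "cz i \<le> c"
  proof (rule ccontr)
    assume "\<not> ?thesis" then have "gg i (cz i) < gg i c" using gg_strict[of c "cz i" i] assms by auto
    then show False using cz[of i] assms \<open>gg i c \<le> 0\<close> by simp
  qed
next
  assume "cz i \<le> c" then show "gg i c \<le> 0"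
    using gg_strict[of "cz i" c i] cz[of i] assms by (cases "c = cz i") auto
qed

lemma capped_tc: "i < n \<Longrightarrow> 0 \<le> c \<Longrightarrow> tc c i = c \<longleftrightarrow> c \<le> cz i"
  using gg_nonneg_iff[of i c] unfolding tc_def gg_def by (auto simp: min_def)

lemma uncapped_tc: "i < n \<Longrightarrow> 0 \<le> c \<Longrightarrow> cz i \<le> c \<Longrightarrow> tc c i = (lam c - b i) / mm i"
  using gg_nonpos_iff[of i c] unfolding tc_def gg_def by (auto simp: min_def)

lemma piece:
  assumes I: "\<And>c. c \<in> I \<Longrightarrow> 0 \<le> c \<and> (\<forall>i<n. (i \<in> A \<longrightarrow> c \<le> cz i) \<and> (i \<notin> A \<longrightarrow> cz i \<le> c))"
  shows "\<exists>p q. (\<forall>c\<in>I. \<forall>i<n. xc c i = p i + c * q i) \<and> (A = {} \<longrightarrow> (\<forall>i<n. q i = 0))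
     \<and> ({..<n} \<subseteq> A \<longrightarrow> (\<forall>i<n. q i = 0))"
proof -
  define w where "w i = (if i \<in> A then 1 / a i else (1 - 1 / mm i) / a i)" for i
  define e where "e i = (if i \<in> A then 1 / a i else 0)" for i
  define k where "k i = (if i \<in> A then b i / a i else b i * (1 - 1 / mm i) / a i)" for i
  define D where "D = (\<Sum>i<n. w i)"
  define E where "E = (\<Sum>i<n. e i)"
  define K where "K = (\<Sum>i<n. k i)"
  have wpos: "0 < w i" if i: "i < n" for i
  proof -
    have m: "1 < mm i" and ai: "0 < a i" using mm_gt1 apos i by auto
    then have "1 / mm i < 1" by simp
    then show ?thesis using ai unfolding w_def by auto
  qed
  have D: "0 < D" unfolding D_def using wpos n0 by (intro sum_pos) auto
  have trm: "xc c i = lam c * w i - c * e i - k i" if c: "c \<in> I" and i: "i < n" for c i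
  proof (cases "i \<in> A")
    case True
    then have "tc c i = c" using capped_tc[OF i] I[OF c] i by auto
    then show ?thesis using True i unfolding xc_def w_def e_def k_def by (simp add: diff_divide_distrib)
  next
    case False
    then have "tc c i = (lam c - b i) / mm i" using uncapped_tc[OF i] I[OF c] i by auto
    then have xe: "xc c i = (lam c - b i - (lam c - b i) / mm i) / a i" unfolding xc_def using i by simp
    have "0 < a i" using apos i by simp
    then show ?thesis using False mm_gt1[OF i] unfolding xe w_def e_def k_def
      by (simp add: field_simps)
  qed
  have lamf: "lam c = (1 + K + c * E) / D" if c: "c \<in> I" for c
  proof -
    have "1 = (\<Sum>i<n. xc c i)" using xc_sum I[OF c] by simp
    also have "\<dots> = (\<Sum>i<n. lam c * w i - c * e i - k i)" using trm[OF c] by simp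
    also have "\<dots> = lam c * D - c * E - K" unfolding D_def E_def K_def
      by (simp add: sum_subtractf sum_distrib_left)
    finally show ?thesis using D by (simp add: field_simps)
  qed
  define p where "p i = (1 + K) / D * w i - k i" for i
  define q where "q i = E / D * w i - e i" for i
  have G1: "\<forall>c\<in>I. \<forall>i<n. xc c i = p i + c * q i"
  proof (intro ballI allI impI)
    fix c i assume c: "c \<in> I" and i: "i < n"
    have h: "(1 + K + c * E) / D = (1 + K) / D + c * (E / D)" by (simp add: add_divide_distrib)
    have "xc c i = (1 + K + c * E) / D * w i - c * e i - k i" using trm[OF c i] lamf[OF c] by simp
    also have "\<dots> = p i + c * q i" unfolding h p_def q_def by (simp add: algebra_simps)
    finally show "xc c i = p i + c * q i" .
  qed
  have G2: "A = {} \<longrightarrow> (\<forall>i<n. q i = 0)"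
    unfolding q_def E_def e_def by simp
  have G3: "{..<n} \<subseteq> A \<longrightarrow> (\<forall>i<n. q i = 0)"
  proof (intro impI allI)
    fix i assume A: "{..<n} \<subseteq> A" and i: "i < n"
    have "E = D" unfolding E_def D_def e_def w_def using A by (intro sum.cong) auto
    then show "q i = 0" unfolding q_def e_def w_def using A i D by auto
  qed
  show ?thesis using G1 G2 G3 by blast
qed

end

locale net3 = net2 +
  assumes Tsingleton: "\<forall>c\<ge>0. \<exists>!t. toll_eq n a b c t"
begin

lemma toll_of_cap_eq: "0 \<le> c \<Longrightarrow> toll_of_cap n a b c = tc c"
  unfolding toll_of_cap_def using Tsingleton tc_toll_eq by (metis the1_equality)

lemma flow_of_cap_eq: "0 \<le> c \<Longrightarrow> flow_of_cap n a b c = xc c"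
  unfolding flow_of_cap_def using toll_of_cap_eq eq_flow_tc by simp

lemma capped_eq: "0 \<le> c \<Longrightarrow> capped_set n a b c = {i. i < n \<and> c \<le> cz i}"
  unfolding capped_set_def using toll_of_cap_eq capped_tc by auto

lemma flow0: "i < n \<Longrightarrow> xc 0 i = eq_flow n a b (\<lambda>_. 0) i"
proof -
  assume i: "i < n"
  have "tc 0 = (\<lambda>_. 0)"
  proof
    fix j show "tc 0 j = 0" unfolding tc_def using u_pos[of 0 j] by (auto simp: min_def)
  qed
  then show ?thesis using eq_flow_tc[of 0] by simp
qed

lemma cost_cont: "continuous_on {0..} (\<lambda>c. total_cost n a b (xc c))"
proof -
  have "continuous_on {0..} (\<lambda>c. \<Sum>i<n. (a i * ((lam c - b i - min c ((lam c - b i) / mm i)) / a i) + b i)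
      * ((lam c - b i - min c ((lam c - b i) / mm i)) / a i))"
    by (intro continuous_intros lam_cont) (use mm_gt1 apos in force)+
  moreover have "\<And>c. total_cost n a b (xc c) = (\<Sum>i<n. (a i * ((lam c - b i - min c ((lam c - b i) / mm i)) / a i) + b i)
      * ((lam c - b i - min c ((lam c - b i) / mm i)) / a i))"
    unfolding total_cost_def latency_def xc_def tc_def by simp
  ultimately show ?thesis by simp
qed

lemma sum_quad: "(\<Sum>i\<in>A. X i + c * Y i + c^2 * Z i) = sum X A + sum Y A * c + sum Z A * (c::real)^2"
  by (simp add: sum.distrib sum_distrib_right sum_distrib_left mult.commute)

lemma quad: assumes "\<forall>c\<in>I. \<forall>i<n. f c i = p i + c * q i"
  shows "\<exists>\<alpha> \<beta> \<gamma>. \<forall>c\<in>I. total_cost n a b (f c) = \<alpha> + \<beta> * c + \<gamma> * c^2"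
proof (intro exI ballI)
  fix c assume c: "c \<in> I"
  have "total_cost n a b (f c) = (\<Sum>i<n. (a i * (p i + c * q i) + b i) * (p i + c * q i))"
    unfolding total_cost_def latency_def using assms c by simp
  also have "\<dots> = (\<Sum>i<n. (a i * p i + b i) * p i + c * (2 * a i * p i * q i + b i * q i) + c^2 * (a i * q i * q i))"
    by (intro sum.cong) (auto simp: algebra_simps power2_eq_square)
  also have "\<dots> = (\<Sum>i<n. (a i * p i + b i) * p i) + (\<Sum>i<n. 2 * a i * p i * q i + b i * q i) * c
      + (\<Sum>i<n. a i * q i * q i) * c^2"
    by (rule sum_quad)
  finally show "total_cost n a b (f c) = (\<Sum>i<n. (a i * p i + b i) * p i) + (\<Sum>i<n. 2 * a i * p i * q i + b i * q i) * c
      + (\<Sum>i<n. a i * q i * q i) * c^2" .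
qed


lemma main:
  shows "\<exists>(j::nat) (cs :: nat \<Rightarrow> real) (As :: nat \<Rightarrow> nat set).
     1 \<le> j \<and> j \<le> n
   \<and> (\<forall>k. 1 \<le> k \<and> k < j \<longrightarrow> cs (k+1) < cs k) \<and> 0 < cs j
   \<and> As 0 = {} \<and> (\<forall>k<j. As k \<subset> As (k+1)) \<and> As j = {..<n}
   \<and> (\<forall>k<j. \<forall>c. 0 \<le> c \<and> cs (k+1) < c \<and> (k = 0 \<or> c \<le> cs k) \<longrightarrow> capped_set n a b c = As k)
   \<and> (\<forall>c. 0 \<le> c \<and> c \<le> cs j \<longrightarrow> capped_set n a b c = {..<n})
   \<and> (\<exists>p q :: nat \<Rightarrow> real. \<forall>c\<ge>cs 1. \<forall>i<n. flow_of_cap n a b c i = p i + c * q i)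
   \<and> (\<exists>\<alpha> \<beta> \<gamma> :: real. \<forall>c\<ge>cs 1. total_cost n a b (flow_of_cap n a b c) = \<alpha> + \<beta> * c + \<gamma> * c^2)
   \<and> (\<forall>c\<ge>cs 1. \<forall>i<n. flow_of_cap n a b c i = flow_of_cap n a b (cs 1) i)
   \<and> (\<forall>k. 1 \<le> k \<and> k < j \<longrightarrow>
        (\<exists>p q :: nat \<Rightarrow> real. \<forall>c. cs (k+1) \<le> c \<and> c \<le> cs k \<longrightarrow> (\<forall>i<n. flow_of_cap n a b c i = p i + c * q i))
      \<and> (\<exists>\<alpha> \<beta> \<gamma> :: real. \<forall>c. cs (k+1) \<le> c \<and> c \<le> cs k \<longrightarrow>
            total_cost n a b (flow_of_cap n a b c) = \<alpha> + \<beta> * c + \<gamma> * c^2))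
   \<and> (\<exists>p q :: nat \<Rightarrow> real. \<forall>c. 0 \<le> c \<and> c \<le> cs j \<longrightarrow> (\<forall>i<n. flow_of_cap n a b c i = p i + c * q i))
   \<and> (\<exists>\<alpha> \<beta> \<gamma> :: real. \<forall>c. 0 \<le> c \<and> c \<le> cs j \<longrightarrow> total_cost n a b (flow_of_cap n a b c) = \<alpha> + \<beta> * c + \<gamma> * c^2)
   \<and> (\<forall>c. 0 \<le> c \<and> c \<le> cs j \<longrightarrow> (\<forall>i<n. flow_of_cap n a b c i = eq_flow n a b (\<lambda>_. 0) i))
   \<and> (\<exists>c\<ge>0. \<forall>c'\<ge>0. total_cost n a b (flow_of_cap n a b c) \<le> total_cost n a b (flow_of_cap n a b c'))"
proof -
  define Z where "Z = cz ` {..<n}"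
  define L where "L = sorted_list_of_set Z"
  define j where "j = length L"
  define cs where "cs k = L ! (j - k)" for k
  define As where "As k = (if k = 0 then {} else {i. i < n \<and> cs k \<le> cz i})" for k
  have fZ: "finite Z" unfolding Z_def by simp
  have Zne: "Z \<noteq> {}" unfolding Z_def using n0 by auto
  have setL: "set L = Z" unfolding L_def using fZ by simp
  have jc: "j = card Z" unfolding j_def L_def by simp
  have strict: "sorted_wrt (<) L" unfolding L_def by (rule strict_sorted_list_of_set)
  have C1: "1 \<le> j" using jc fZ Zne by (simp add: Suc_le_eq card_gt_0_iff)
  have C2: "j \<le> n" unfolding jc Z_def using card_image_le[of "{..<n}" cz] by simp
  have csZ: "\<And>k. 1 \<le> k \<Longrightarrow> k \<le> j \<Longrightarrow> cs k \<in> Z"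
  proof -
    fix k :: nat assume k: "1 \<le> k" "k \<le> j"
    then have "j - k < length L" unfolding j_def by simp
    then have "L ! (j - k) \<in> set L" by (rule nth_mem)
    then show "cs k \<in> Z" unfolding cs_def setL .
  qed
  have cs_lt: "\<And>k l. 1 \<le> k \<Longrightarrow> k < l \<Longrightarrow> l \<le> j \<Longrightarrow> cs l < cs k"
    unfolding cs_def using strict j_def by (intro sorted_wrt_nth_less[where P="(<)"]) auto
  have cs_le: "\<And>k l. 1 \<le> k \<Longrightarrow> k \<le> l \<Longrightarrow> l \<le> j \<Longrightarrow> cs l \<le> cs k"
    using cs_lt by (metis order_le_less order_refl)
  have czcs: "\<And>i. i < n \<Longrightarrow> \<exists>l. 1 \<le> l \<and> l \<le> j \<and> cz i = cs l"
  proof -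
    fix i assume i: "i < n"
    then have "cz i \<in> set L" unfolding setL Z_def by simp
    then obtain p where p: "p < j" "L ! p = cz i" unfolding j_def in_set_conv_nth by blast
    show "\<exists>l. 1 \<le> l \<and> l \<le> j \<and> cz i = cs l"
      by (rule exI[of _ "j - p"]) (use p in \<open>auto simp: cs_def\<close>)
  qed
  have cs_pos: "\<And>k. 1 \<le> k \<Longrightarrow> k \<le> j \<Longrightarrow> 0 < cs k"
  proof -
    fix k :: nat assume "1 \<le> k" "k \<le> j"
    then obtain i where "i < n" "cs k = cz i" using csZ unfolding Z_def by force
    then show "0 < cs k" using cz by simp
  qed
  have czle1: "\<And>i. i < n \<Longrightarrow> cz i \<le> cs 1"
  proof -
    fix i assume "i < n"
    then obtain l where l: "1 \<le> l" "l \<le> j" "cz i = cs l" using czcs by blast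
    then show "cz i \<le> cs 1" using cs_le[of 1 l] by simp
  qed
  have czgej: "\<And>i. i < n \<Longrightarrow> cs j \<le> cz i"
  proof -
    fix i assume "i < n"
    then obtain l where l: "1 \<le> l" "l \<le> j" "cz i = cs l" using czcs by blast
    then show "cs j \<le> cz i" using cs_le[of l j] by simp
  qed
  have split: "\<And>i k. i < n \<Longrightarrow> 1 \<le> k \<Longrightarrow> k < j \<Longrightarrow> cs k \<le> cz i \<or> cz i \<le> cs (k+1)"
  proof -
    fix i k assume i: "i < n" and k: "1 \<le> k" "k < j"
    obtain l where l: "1 \<le> l" "l \<le> j" "cz i = cs l" using czcs[OF i] by blast
    show "cs k \<le> cz i \<or> cz i \<le> cs (k+1)"
    proof (cases "l \<le> k")
      case True then show ?thesis using cs_le[of l k] l k by auto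
    next
      case False then show ?thesis using cs_le[of "k+1" l] l k by auto
    qed
  qed
  have C3: "\<forall>k. 1 \<le> k \<and> k < j \<longrightarrow> cs (k+1) < cs k" using cs_lt by auto
  have C4: "0 < cs j" using cs_pos C1 by simp
  have C5: "As 0 = {}" unfolding As_def by simp
  have C6: "\<forall>k<j. As k \<subset> As (k+1)"
  proof (intro allI impI)
    fix k assume k: "k < j"
    obtain i0 where i0: "i0 < n" "cz i0 = cs (k+1)" using csZ[of "k+1"] k unfolding Z_def by force
    have in1: "i0 \<in> As (k+1)" unfolding As_def using i0 by simp
    show "As k \<subset> As (k+1)"
    proof (cases "k = 0")
      case True then show ?thesis using in1 unfolding As_def by auto
    next
      case False
      then have lt: "cs (k+1) < cs k" using cs_lt[of k "k+1"] k by simp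
      have "As k \<subseteq> As (k+1)" unfolding As_def using False lt by auto
      moreover have "i0 \<notin> As k" unfolding As_def using False lt i0 by simp
      ultimately show ?thesis using in1 by blast
    qed
  qed
  have C7: "As j = {..<n}" unfolding As_def using C1 czgej by auto
  have C8: "\<forall>k<j. \<forall>c. 0 \<le> c \<and> cs (k+1) < c \<and> (k = 0 \<or> c \<le> cs k) \<longrightarrow> capped_set n a b c = As k"
  proof (intro allI impI)
    fix k c assume k: "k < j" and c: "0 \<le> c \<and> cs (k+1) < c \<and> (k = 0 \<or> c \<le> cs k)"
    have ce: "capped_set n a b c = {i. i < n \<and> c \<le> cz i}" using capped_eq c by simp
    show "capped_set n a b c = As k"
    proof (cases "k = 0")
      case True
      have "\<And>i. i < n \<Longrightarrow> \<not> c \<le> cz i" using czle1 c True by force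
      then show ?thesis unfolding ce using True unfolding As_def by auto
    next
      case False
      have "\<And>i. i < n \<Longrightarrow> c \<le> cz i \<longleftrightarrow> cs k \<le> cz i"
        using split[of _ k] False k c by force
      then show ?thesis unfolding ce using c False unfolding As_def by auto
    qed
  qed
  have C9: "\<forall>c. 0 \<le> c \<and> c \<le> cs j \<longrightarrow> capped_set n a b c = {..<n}"
    using capped_eq czgej by force
  obtain p1 q1 where P1: "\<forall>c\<in>{c. cs 1 \<le> c}. \<forall>i<n. xc c i = p1 i + c * q1 i" and q1: "\<forall>i<n. q1 i = 0"
    using piece[of "{c. cs 1 \<le> c}" "{}"] cs_pos[of 1] C1 czle1 by force
  have F1: "\<forall>c\<in>{c. cs 1 \<le> c}. \<forall>i<n. flow_of_cap n a b c i = p1 i + c * q1 i"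
    using P1 flow_of_cap_eq cs_pos[of 1] C1 by auto
  have C10: "\<exists>p q :: nat \<Rightarrow> real. \<forall>c\<ge>cs 1. \<forall>i<n. flow_of_cap n a b c i = p i + c * q i"
    using F1 by auto
  have C11: "\<exists>\<alpha> \<beta> \<gamma> :: real. \<forall>c\<ge>cs 1. total_cost n a b (flow_of_cap n a b c) = \<alpha> + \<beta> * c + \<gamma> * c^2"
    using quad[OF F1] by auto
  have C12: "\<forall>c\<ge>cs 1. \<forall>i<n. flow_of_cap n a b c i = flow_of_cap n a b (cs 1) i"
    using F1 q1 by simp
  have C13: "\<forall>k. 1 \<le> k \<and> k < j \<longrightarrow>
        (\<exists>p q :: nat \<Rightarrow> real. \<forall>c. cs (k+1) \<le> c \<and> c \<le> cs k \<longrightarrow> (\<forall>i<n. flow_of_cap n a b c i = p i + c * q i))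
      \<and> (\<exists>\<alpha> \<beta> \<gamma> :: real. \<forall>c. cs (k+1) \<le> c \<and> c \<le> cs k \<longrightarrow>
            total_cost n a b (flow_of_cap n a b c) = \<alpha> + \<beta> * c + \<gamma> * c^2)"
  proof (intro allI impI)
    fix k assume k: "1 \<le> k \<and> k < j"
    define I where "I = {c. cs (k+1) \<le> c \<and> c \<le> cs k}"
    have pos: "0 < cs (k+1)" using cs_pos[of "k+1"] k by simp
    have "\<And>c. c \<in> I \<Longrightarrow> 0 \<le> c \<and> (\<forall>i<n. (i \<in> As k \<longrightarrow> c \<le> cz i) \<and> (i \<notin> As k \<longrightarrow> cz i \<le> c))"
    proof -
      fix c assume c: "c \<in> I"
      show "0 \<le> c \<and> (\<forall>i<n. (i \<in> As k \<longrightarrow> c \<le> cz i) \<and> (i \<notin> As k \<longrightarrow> cz i \<le> c))"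
        using c pos split[of _ k] k unfolding I_def As_def by force
    qed
    then obtain p q where P: "\<forall>c\<in>I. \<forall>i<n. xc c i = p i + c * q i"
      using piece[of I "As k"] by blast
    have F: "\<forall>c\<in>I. \<forall>i<n. flow_of_cap n a b c i = p i + c * q i"
      using P flow_of_cap_eq pos unfolding I_def by auto
    show "(\<exists>p q :: nat \<Rightarrow> real. \<forall>c. cs (k+1) \<le> c \<and> c \<le> cs k \<longrightarrow> (\<forall>i<n. flow_of_cap n a b c i = p i + c * q i))
      \<and> (\<exists>\<alpha> \<beta> \<gamma> :: real. \<forall>c. cs (k+1) \<le> c \<and> c \<le> cs k \<longrightarrow>
            total_cost n a b (flow_of_cap n a b c) = \<alpha> + \<beta> * c + \<gamma> * c^2)"
      using F quad[OF F] unfolding I_def by auto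
  qed
  obtain p0 q0 where P0: "\<forall>c\<in>{c. 0 \<le> c \<and> c \<le> cs j}. \<forall>i<n. xc c i = p0 i + c * q0 i"
     and q0: "\<forall>i<n. q0 i = 0"
    using piece[of "{c. 0 \<le> c \<and> c \<le> cs j}" "{..<n}"] czgej by force
  have F0: "\<forall>c\<in>{c. 0 \<le> c \<and> c \<le> cs j}. \<forall>i<n. flow_of_cap n a b c i = p0 i + c * q0 i"
    using P0 flow_of_cap_eq by auto
  have C14: "\<exists>p q :: nat \<Rightarrow> real. \<forall>c. 0 \<le> c \<and> c \<le> cs j \<longrightarrow> (\<forall>i<n. flow_of_cap n a b c i = p i + c * q i)"
    using F0 by auto
  have C15: "\<exists>\<alpha> \<beta> \<gamma> :: real. \<forall>c. 0 \<le> c \<and> c \<le> cs j \<longrightarrow> total_cost n a b (flow_of_cap n a b c) = \<alpha> + \<beta> * c + \<gamma> * c^2"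
    using quad[OF F0] by auto
  have C16: "\<forall>c. 0 \<le> c \<and> c \<le> cs j \<longrightarrow> (\<forall>i<n. flow_of_cap n a b c i = eq_flow n a b (\<lambda>_. 0) i)"
  proof (intro allI impI)
    fix c i assume c: "0 \<le> c \<and> c \<le> cs j" and i: "i < n"
    have "flow_of_cap n a b c i = p0 i" using F0 q0 c i by simp
    also have "\<dots> = flow_of_cap n a b 0 i" using F0 q0 C4 i by simp
    also have "\<dots> = eq_flow n a b (\<lambda>_. 0) i" using flow_of_cap_eq[of 0] flow0[OF i] by simp
    finally show "flow_of_cap n a b c i = eq_flow n a b (\<lambda>_. 0) i" .
  qed
  have hc: "\<And>c. 0 \<le> c \<Longrightarrow> total_cost n a b (flow_of_cap n a b c) = total_cost n a b (xc c)"
    using flow_of_cap_eq by simp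
  have cs1: "0 < cs 1" using cs_pos[of 1] C1 by simp
  have "continuous_on {0..cs 1} (\<lambda>c. total_cost n a b (xc c))"
    by (rule continuous_on_subset[OF cost_cont]) auto
  then obtain c0 where c0: "c0 \<in> {0..cs 1}" "\<forall>y\<in>{0..cs 1}. total_cost n a b (xc c0) \<le> total_cost n a b (xc y)"
    using continuous_attains_inf[of "{0..cs 1}" "\<lambda>c. total_cost n a b (xc c)"] cs1 by auto
  have C17: "\<exists>c\<ge>0. \<forall>c'\<ge>0. total_cost n a b (flow_of_cap n a b c) \<le> total_cost n a b (flow_of_cap n a b c')"
  proof (intro exI[of _ c0] conjI allI impI)
    show "0 \<le> c0" using c0 by simp
    fix c' :: real assume c': "0 \<le> c'"
    show "total_cost n a b (flow_of_cap n a b c0) \<le> total_cost n a b (flow_of_cap n a b c')"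
    proof (cases "c' \<le> cs 1")
      case True then show ?thesis using c0 c' hc by auto
    next
      case False
      then have "total_cost n a b (flow_of_cap n a b c') = total_cost n a b (flow_of_cap n a b (cs 1))"
      proof -
        have e: "\<And>i. i < n \<Longrightarrow> flow_of_cap n a b c' i = flow_of_cap n a b (cs 1) i"
        proof -
          fix i assume i: "i < n"
          have "cs 1 \<le> c'" using False by simp
          then show "flow_of_cap n a b c' i = flow_of_cap n a b (cs 1) i" using i by (rule C12[rule_format])
        qed
        show ?thesis unfolding total_cost_def by (rule sum.cong[OF refl]) (simp add: e)
      qed
      then show ?thesis using c0 cs1 hc by auto
    qed
  qed
  show ?thesis
    apply (rule exI[of _ j], rule exI[of _ cs], rule exI[of _ As])
    using C1 C2 C3 C4 C5 C6 C7 C8 C9 C10 C11 C12 C13 C14 C15 C16 C17 by blast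
qed

end

theorem mainTheorem7:
  fixes n :: nat and a b :: "nat \<Rightarrow> real"
  assumes n2: "2 \<le> n"
    and apos: "\<forall>i<n. 0 < a i"
    and bnn: "\<forall>i<n. 0 \<le> b i"
    and x0pos: "\<forall>i<n. 0 < eq_flow n a b (\<lambda>_. 0) i"
    and Tsingleton: "\<forall>c\<ge>0. \<exists>!t. toll_eq n a b c t"
  shows "\<exists>(j::nat) (cs :: nat \<Rightarrow> real) (As :: nat \<Rightarrow> nat set).
     1 \<le> j \<and> j \<le> n
   \<and> (\<forall>k. 1 \<le> k \<and> k < j \<longrightarrow> cs (k+1) < cs k) \<and> 0 < cs j
   \<and> As 0 = {} \<and> (\<forall>k<j. As k \<subset> As (k+1)) \<and> As j = {..<n}
   \<and> (\<forall>k<j. \<forall>c. 0 \<le> c \<and> cs (k+1) < c \<and> (k = 0 \<or> c \<le> cs k) \<longrightarrow> capped_set n a b c = As k)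
   \<and> (\<forall>c. 0 \<le> c \<and> c \<le> cs j \<longrightarrow> capped_set n a b c = {..<n})
   \<comment> \<open>on [c_1, oo): x(c) affine (indeed constant), C(x(c)) quadratic\<close>
   \<and> (\<exists>p q :: nat \<Rightarrow> real. \<forall>c\<ge>cs 1. \<forall>i<n. flow_of_cap n a b c i = p i + c * q i)
   \<and> (\<exists>\<alpha> \<beta> \<gamma> :: real. \<forall>c\<ge>cs 1. total_cost n a b (flow_of_cap n a b c) = \<alpha> + \<beta> * c + \<gamma> * c^2)
   \<and> (\<forall>c\<ge>cs 1. \<forall>i<n. flow_of_cap n a b c i = flow_of_cap n a b (cs 1) i)
   \<comment> \<open>on [c_{k+1}, c_k], k = 1..j-1\<close>
   \<and> (\<forall>k. 1 \<le> k \<and> k < j \<longrightarrow>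
        (\<exists>p q :: nat \<Rightarrow> real. \<forall>c. cs (k+1) \<le> c \<and> c \<le> cs k \<longrightarrow> (\<forall>i<n. flow_of_cap n a b c i = p i + c * q i))
      \<and> (\<exists>\<alpha> \<beta> \<gamma> :: real. \<forall>c. cs (k+1) \<le> c \<and> c \<le> cs k \<longrightarrow>
            total_cost n a b (flow_of_cap n a b c) = \<alpha> + \<beta> * c + \<gamma> * c^2))
   \<comment> \<open>on [0, c_j]: x(c) = x(0) (untolled equilibrium)\<close>
   \<and> (\<exists>p q :: nat \<Rightarrow> real. \<forall>c. 0 \<le> c \<and> c \<le> cs j \<longrightarrow> (\<forall>i<n. flow_of_cap n a b c i = p i + c * q i))
   \<and> (\<exists>\<alpha> \<beta> \<gamma> :: real. \<forall>c. 0 \<le> c \<and> c \<le> cs j \<longrightarrow> total_cost n a b (flow_of_cap n a b c) = \<alpha> + \<beta> * c + \<gamma> * c^2)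
   \<and> (\<forall>c. 0 \<le> c \<and> c \<le> cs j \<longrightarrow> (\<forall>i<n. flow_of_cap n a b c i = eq_flow n a b (\<lambda>_. 0) i))
   \<comment> \<open>the minimum of C(x(c)) over c \<ge> 0 is attained\<close>
   \<and> (\<exists>c\<ge>0. \<forall>c'\<ge>0. total_cost n a b (flow_of_cap n a b c) \<le> total_cost n a b (flow_of_cap n a b c'))"
  proof -
  interpret net3 n a b
    by unfold_locales (use n2 apos x0pos Tsingleton in auto)
  show ?thesis by (rule main)
qed

end
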